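(* Let $X,Y\subseteq\mathbb{R}^n$, let $\xi\in\mathbb{R}\setminus\{0\}$ and let $A$ be an invertible $n\times n$ matrix. The cost $c(x,y)=|x|^2|y|^2+\xi\langle Ax,y\rangle$ satisfies the $2$-twist condition: for every $(x_0,y_0)\in X\times Y$ the set $L(x_0,y_0)=\{y\in Y:D_xc(x_0,y)=D_xc(x_0,y_0)\}$ has at most two elements.
   Context: $|\cdot|$ and $\langle\cdot,\cdot\rangle$ are the Euclidean norm and inner product on $\mathbb{R}^n$; $D_xc$ denotes the gradient of $c$ in the variable $x$. *)

theory Defs
  imports "HOL-Analysis.Analysis"
begin

definition cost :: "real^'n^'n \<Rightarrow> real \<Rightarrow> real^'n \<Rightarrow> real^'n \<Rightarrow> real" where
  "cost A xi x y = (norm x)^2 * (norm y)^2 + xi * ((A *v x) \<bullet> y)"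

definition grad_x :: "('a::euclidean_space \<Rightarrow> 'b \<Rightarrow> real) \<Rightarrow> 'a \<Rightarrow> 'b \<Rightarrow> 'a" where
  "grad_x c x y = (SOME g. ((\<lambda>x'. c x' y) has_derivative (\<lambda>h. g \<bullet> h)) (at x))"

definition twist_set :: "('a::euclidean_space \<Rightarrow> 'b \<Rightarrow> real) \<Rightarrow> 'b set \<Rightarrow> 'a \<Rightarrow> 'b \<Rightarrow> 'b set" where
  "twist_set c Y x0 y0 = {y \<in> Y. grad_x c x0 y = grad_x c x0 y0}"

end

theory Submission
  imports Defs
begin

lemma cost_deriv:
  fixes A :: "real^'n^'n"
  shows "((\<lambda>x'. cost A xi x' y) has_derivative
     (\<lambda>h. ((2 * (norm y)^2) *\<^sub>R x + xi *\<^sub>R (y v* A)) \<bullet> h)) (at x)"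
proof -
  have e: "(\<lambda>x'. cost A xi x' y) = (\<lambda>x'. (x' \<bullet> x') * (norm y)^2 + xi * (y \<bullet> (A *v x')))"
    by (auto simp: cost_def power2_norm_eq_inner inner_commute)
  have dl: "\<And>h. y \<bullet> (A *v h) = h \<bullet> (y v* A)" by (metis dot_lmul_matrix inner_commute)
  have LA: "((*v) A has_derivative (*v) A) (at x)"
    by (rule bounded_linear_imp_has_derivative[OF matrix_vector_mul_bounded_linear])
  have "((\<lambda>x'. (x' \<bullet> x') * (norm y)^2 + xi * (y \<bullet> (A *v x'))) has_derivative
     (\<lambda>h. (x \<bullet> h + h \<bullet> x) * (norm y)^2 + xi * (y \<bullet> (A *v h)))) (at x)"
    using LA by (intro derivative_eq_intros) auto
  moreover have "(\<lambda>h. (x \<bullet> h + h \<bullet> x) * (norm y)^2 + xi * (y \<bullet> (A *v h))) =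
     (\<lambda>h. ((2 * (norm y)^2) *\<^sub>R x + xi *\<^sub>R (y v* A)) \<bullet> h)"
    using dl by (auto simp: inner_add_left inner_commute algebra_simps)
  ultimately show ?thesis using e by simp
qed

lemma grad_cost:
  fixes A :: "real^'n^'n"
  shows "grad_x (cost A xi) x y = (2 * (norm y)^2) *\<^sub>R x + xi *\<^sub>R (y v* A)"
proof -
  let ?g = "(2 * (norm y)^2) *\<^sub>R x + xi *\<^sub>R (y v* A)"
  have H: "\<And>g. ((\<lambda>x'. cost A xi x' y) has_derivative (\<lambda>h. g \<bullet> h)) (at x) \<Longrightarrow> g = ?g"
  proof -
    fix g assume "((\<lambda>x'. cost A xi x' y) has_derivative (\<lambda>h. g \<bullet> h)) (at x)"
    from has_derivative_unique[OF this cost_deriv]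
    have "\<And>h. g \<bullet> h = ?g \<bullet> h" by metis
    hence "(g - ?g) \<bullet> (g - ?g) = 0" by (simp add: inner_diff_left)
    then show "g = ?g" by simp
  qed
  show ?thesis unfolding grad_x_def by (rule some_equality, rule cost_deriv, rule H)
qed

lemma three_roots:
  fixes a b c u1 u2 u3 :: real
  assumes "a \<noteq> 0" "a*u1^2+b*u1+c=0" "a*u2^2+b*u2+c=0" "a*u3^2+b*u3+c=0"
    "u1 \<noteq> u2" "u1 \<noteq> u3" "u2 \<noteq> u3"
  shows False
proof -
  have "(u1-u2)*(a*(u1+u2)+b) = 0" using assms(2,3) by (simp add: algebra_simps power2_eq_square)
  hence 1: "a*(u1+u2)+b = 0" using assms(5) by simp
  have "(u1-u3)*(a*(u1+u3)+b) = 0" using assms(2,4) by (simp add: algebra_simps power2_eq_square)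
  hence 2: "a*(u1+u3)+b = 0" using assms(6) by simp
  have "a*(u2-u3) = (a*(u1+u2)+b) - (a*(u1+u3)+b)" by algebra
  with 1 2 have "a*(u2-u3) = 0" by simp
  thus False using assms by simp
qed

lemma card_le2:
  assumes "\<And>a b c. a\<in>S \<Longrightarrow> b\<in>S \<Longrightarrow> c\<in>S \<Longrightarrow> a=b \<or> a=c \<or> b=c"
  shows "finite S \<and> card S \<le> 2"
proof (cases "S = {}")
  case True then show ?thesis by simp
next
  case False
  then obtain a where a: "a \<in> S" by blast
  show ?thesis
  proof (cases "S \<subseteq> {a}")
    case True
    then show ?thesis by (metis card.empty card.insert empty_iff finite.intros(1) finite_insert
      finite_subset card_mono one_add_one le_add2 order.trans subset_singletonD insert_absorb2 is_singletonI
      is_singleton_altdef zero_le)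
  next
    case False
    then obtain b where b: "b \<in> S" "b \<noteq> a" by blast
    have "S \<subseteq> {a,b}" using assms a b by blast
    moreover have "card {a,b} \<le> 2" by (simp add: card_insert_if)
    ultimately show ?thesis by (meson card_mono finite.intros finite_subset order.trans)
  qed
qed

theorem mainTheorem15:
  fixes X Y :: "(real^'n) set" and xi :: real and A :: "real^'n^'n"
  assumes "xi \<noteq> 0" and "invertible A"
  shows "\<forall>x0\<in>X. \<forall>y0\<in>Y. finite (twist_set (cost A xi) Y x0 y0)
                          \<and> card (twist_set (cost A xi) Y x0 y0) \<le> 2"
proof (intro ballI)
  fix x0 y0
  obtain B where B: "A ** B = mat 1" using assms(2) unfolding invertible_def by blast
  let ?v = "(2 * (norm y0)^2) *\<^sub>R x0 + xi *\<^sub>R (y0 v* A)"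
  define p where "p = (1/xi) *\<^sub>R (?v v* B)"
  define q where "q = (-(2/xi)) *\<^sub>R (x0 v* B)"
  let ?L = "twist_set (cost A xi) Y x0 y0"
  have rep: "y = p + (norm y)^2 *\<^sub>R q" if "y \<in> ?L" for y
  proof -
    have "(2 * (norm y)^2) *\<^sub>R x0 + xi *\<^sub>R (y v* A) = ?v"
      using that unfolding twist_set_def by (simp add: grad_cost)
    hence "xi *\<^sub>R (y v* A) = ?v - (2 * (norm y)^2) *\<^sub>R x0" by (simp add: algebra_simps)
    hence "(xi *\<^sub>R (y v* A)) v* B = (?v - (2 * (norm y)^2) *\<^sub>R x0) v* B" by simp
    hence "xi *\<^sub>R y = ?v v* B - ((2 * (norm y)^2) *\<^sub>R x0) v* B"
      by (simp only: vector_matrix_mul_assoc B scaleR_vector_matrix_assoc vector_matrix_mult_diff_distrib vector_matrix_mul_rid)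
    hence "xi *\<^sub>R y = ?v v* B - (2 * (norm y)^2) *\<^sub>R (x0 v* B)"
      by (simp only: scaleR_vector_matrix_assoc)
    hence "y = (1/xi) *\<^sub>R (?v v* B - (2 * (norm y)^2) *\<^sub>R (x0 v* B))"
      using assms(1) by (metis nonzero_divide_eq_eq scaleR_scaleR divide_inverse_commute
         mult.commute inverse_eq_divide scaleR_one divide_self_if)
    then show ?thesis unfolding p_def q_def using assms(1) by (simp add: algebra_simps)
  qed
  have quad: "(norm q)^2 * ((norm y)^2)^2 + (2 * (p \<bullet> q) - 1) * (norm y)^2 + (norm p)^2 = 0"
    if "y \<in> ?L" for y
  proof -
    have "(norm y)^2 = (p + (norm y)^2 *\<^sub>R q) \<bullet> (p + (norm y)^2 *\<^sub>R q)"
      using rep[OF that] by (metis power2_norm_eq_inner)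
    also have "\<dots> = p \<bullet> p + 2 * (norm y)^2 * (p \<bullet> q) + ((norm y)^2)^2 * (q \<bullet> q)"
      by (simp add: inner_add_left inner_add_right inner_commute
          power2_eq_square algebra_simps)
    also have "\<dots> = (norm p)^2 + 2 * (norm y)^2 * (p \<bullet> q) + ((norm y)^2)^2 * (norm q)^2"
      by (simp only: dot_square_norm)
    finally show ?thesis by (simp add: algebra_simps)
  qed
  show "finite ?L \<and> card ?L \<le> 2"
  proof (rule card_le2)
    fix a b c assume abc: "a \<in> ?L" "b \<in> ?L" "c \<in> ?L"
    show "a = b \<or> a = c \<or> b = c"
    proof (cases "q = 0")
      case True
      then show ?thesis using rep abc by (metis add.right_neutral scaleR_zero_right)
    next
      case False
      show ?thesis
      proof (rule ccontr)
        assume "\<not> ?thesis"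
        then have d: "a \<noteq> b" "a \<noteq> c" "b \<noteq> c" by auto
        have "(norm a)^2 \<noteq> (norm b)^2" "(norm a)^2 \<noteq> (norm c)^2" "(norm b)^2 \<noteq> (norm c)^2"
          using d rep abc by metis+
        moreover have "(norm q)^2 \<noteq> 0" using False by simp
        ultimately show False using three_roots quad abc by blast
      qed
    qed
  qed
qed

end
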